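(* Assume condition (A). Then the limit function $R(\lambda)=\lim_{n\to\infty}R_n(\lambda)$, $\lambda\ge 0$, has the representation $$R(\lambda)=c\lambda-\theta\lambda^2-\int_0^\infty\big(e^{-\lambda u}-1+\lambda u\big)\,\Lambda_1(du),$$ where $c\in\mathbb R$, $\theta\ge0$, and $\Lambda_1$ is a $\sigma$-finite measure on $(0,\infty)$ with $\int_0^\infty(u\wedge u^2)\,\Lambda_1(du)<\infty$.
   Context: For each $n\ge1$, let $\{\xi_n(k,j):k,j\ge1\}$ be a family of i.i.d. random variables with values in $\mathbb N=\{0,1,2,\dots\}$, with generating function $g_n(s)=E[s^{\xi_n(1,1)}]$, $0\le s\le 1$. Let $(b_n)$ be positive numbers with $b_n\to\infty$. For $0\le\lambda\le b_n$ set $R_n(\lambda)=nb_n[(1-\lambda/b_n)-g_n(1-\lambda/b_n)]$. Condition (A): the sequence $(R_n)$ is uniformly Lipschitz on each bounded interval (for $n$ large enough that it is defined there) and converges pointwise to a continuous function as $n\to\infty$. *)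

theory Defs
  imports "HOL-Probability.Probability"
begin

definition gen_fun :: "nat pmf \<Rightarrow> real \<Rightarrow> real" where
  "gen_fun p s = measure_pmf.expectation p (\<lambda>k. s ^ k)"

text \<open>R_n(lambda) = n b_n [(1 - lambda/b_n) - g_n(1 - lambda/b_n)];
  meaningful for 0 <= lambda <= b_n.\<close>
definition Rfun :: "(nat \<Rightarrow> nat pmf) \<Rightarrow> (nat \<Rightarrow> real) \<Rightarrow> nat \<Rightarrow> real \<Rightarrow> real" where
  "Rfun p b n lam = real n * b n * ((1 - lam / b n) - gen_fun (p n) (1 - lam / b n))"

end

theory Submission
  imports Defs
begin

definition Nf :: "nat \<Rightarrow> real \<Rightarrow> real" where "Nf k y = (1-y)^k - 1 + real k * y"
definition Mf :: "real \<Rightarrow> real" where "Mf y = exp (-y) - 1 + y"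

lemma Nf_0[simp]: "Nf 0 y = 0" and Nf_1[simp]: "Nf 1 y = 0" by (simp_all add: Nf_def)
lemma Nf_zero[simp]: "Nf k 0 = 0" by (simp add: Nf_def)

lemma Nf_Suc: "Nf (Suc k) y = (1-y) * Nf k y + real k * y^2"
  by (simp add: Nf_def algebra_simps power2_eq_square)

lemma Nf_nonneg: assumes "0 \<le> y" "y \<le> 1" shows "0 \<le> Nf k y"
proof (induction k)
  case (Suc k) then show ?case using assms by (simp add: Nf_Suc)
qed simp

lemma Nf_le_lin: assumes "0 \<le> y" "y \<le> 1" shows "Nf k y \<le> real k * y"
proof -
  have "(1-y)^k \<le> 1" using assms by (simp add: power_le_one)
  then show ?thesis by (simp add: Nf_def)
qed

lemma Nf_upper: assumes "0 \<le> y" "y \<le> 1" shows "Nf k y \<le> real k * (real k - 1) / 2 * y^2"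
proof (induction k)
  case (Suc k)
  have "Nf (Suc k) y = (1-y) * Nf k y + real k * y^2" by (rule Nf_Suc)
  also have "\<dots> \<le> Nf k y + real k * y^2"
    using Nf_nonneg[OF assms, of k] assms by (simp add: mult_left_le_one_le)
  also have "\<dots> \<le> real k * (real k - 1) / 2 * y^2 + real k * y^2" using Suc by simp
  also have "\<dots> = real (Suc k) * (real (Suc k) - 1) / 2 * y^2" by (simp add: field_simps)
  finally show ?case .
qed simp

lemma Nf_lower: assumes "0 \<le> y" "y \<le> 1"
  shows "real k * (real k - 1) / 2 * y^2 - real k * (real k - 1) * (real k - 2) / 6 * y^3 \<le> Nf k y"
proof (induction k)
  case (Suc k)
  define A where "A = real k * (real k - 1) / 2 * y^2"
  define B where "B = real k * (real k - 1) * (real k - 2) / 6 * y^3"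
  have B0: "0 \<le> B"
  proof (cases "k \<ge> 2")
    case True then show ?thesis using assms by (auto simp: B_def)
  next
    case False then have "k = 0 \<or> k = 1" by auto
    then show ?thesis by (auto simp: B_def)
  qed
  have "(1-y) * (A - B) \<le> (1-y) * Nf k y" using Suc assms by (simp add: A_def B_def mult_left_mono)
  moreover have "(1-y)*(A-B) + real k * y^2 = real (Suc k) * (real (Suc k) - 1) / 2 * y^2
      - real (Suc k) * (real (Suc k) - 1) * (real (Suc k) - 2) / 6 * y^3 + y * B"
    by (simp add: A_def B_def field_simps power2_eq_square power3_eq_cube)
  moreover have "0 \<le> y * B" using B0 assms by simp
  ultimately show ?case by (simp add: Nf_Suc)
qed simp

lemma exp_minus_upper: fixes y :: real assumes "0 \<le> y" shows "exp (-y) \<le> 1 - y + y^2/2"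
proof -
  have "(\<lambda>t. 1 - t + t^2/2 - exp (-t)) 0 \<le> (\<lambda>t. 1 - t + t^2/2 - exp (-t)) y"
  proof (rule DERIV_nonneg_imp_nondecreasing[OF assms])
    fix x assume "0 \<le> x" "x \<le> y"
    show "\<exists>d. ((\<lambda>t. 1 - t + t^2/2 - exp (-t)) has_real_derivative d) (at x) \<and> 0 \<le> d"
      apply (rule exI[of _ "-1 + x + exp (-x)"])
      apply (auto intro!: derivative_eq_intros simp: add.commute[of "-1"])
      using exp_ge_add_one_self[of "-x"] by simp
  qed
  then show ?thesis by simp
qed

lemma exp_minus_lower: fixes y :: real assumes "0 \<le> y" shows "1 - y + y^2/2 - y^3/6 \<le> exp (-y)"
proof -
  have "(\<lambda>t. exp (-t) - 1 + t - t^2/2 + t^3/6) 0 \<le> (\<lambda>t. exp (-t) - 1 + t - t^2/2 + t^3/6) y"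
  proof (rule DERIV_nonneg_imp_nondecreasing[OF assms])
    fix x assume "0 \<le> x" "x \<le> y"
    show "\<exists>d. ((\<lambda>t. exp (-t) - 1 + t - t^2/2 + t^3/6) has_real_derivative d) (at x) \<and> 0 \<le> d"
      apply (rule exI[of _ "- exp (-x) + 1 - x + x^2/2"])
      apply (auto intro!: derivative_eq_intros simp: power2_eq_square power3_eq_cube algebra_simps)
      using exp_minus_upper[OF \<open>0 \<le> x\<close>] by (simp add: power2_eq_square)
  qed
  then show ?thesis by simp
qed

lemma Mf_0[simp]: "Mf 0 = 0" by (simp add: Mf_def)
lemma Mf_upper: "0 \<le> y \<Longrightarrow> Mf y \<le> y^2/2" using exp_minus_upper[of y] by (simp add: Mf_def)
lemma Mf_lower: "0 \<le> y \<Longrightarrow> y^2/2 - y^3/6 \<le> Mf y" using exp_minus_lower[of y] by (simp add: Mf_def)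
lemma Mf_ge: "y - 1 \<le> Mf y" by (simp add: Mf_def)
lemma Mf_le: "0 \<le> y \<Longrightarrow> Mf y \<le> y" by (simp add: Mf_def)
lemma Mf_nonneg: "0 \<le> Mf y" using exp_ge_add_one_self[of "-y"] by (simp add: Mf_def)
lemma Mf_pos: assumes "0 < y" shows "0 < Mf y"
proof -
  have "y^2/2 - y^3/6 \<le> Mf y" by (rule Mf_lower) (use assms in simp)
  show ?thesis
  proof (cases "y \<le> 2")
    case True
    have "0 < y^2 * (3 - y) / 6" using assms True by simp
    also have "y^2 * (3 - y) / 6 = y^2/2 - y^3/6" by (simp add: field_simps power2_eq_square power3_eq_cube)
    finally show ?thesis using Mf_lower[of y] assms by linarith
  next
    case False then show ?thesis using Mf_ge[of y] by linarith
  qed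
qed

lemma Mf_min: assumes "0 \<le> y" shows "min y (y^2) \<le> 6 * Mf y"
proof -
  consider "y \<le> 1" | "1 < y" "y \<le> 2" | "2 < y" by linarith
  then show ?thesis
  proof cases
    case 1
    have "y^3 = y^2*y" by (simp add: power2_eq_square power3_eq_cube)
    moreover have "y^2*y \<le> y^2" using 1 assms by (simp add: mult_left_le)
    moreover have "0 \<le> y^2" by simp
    ultimately have "y^2 \<le> 6 * Mf y" using Mf_lower[OF assms] by linarith
    then show ?thesis by linarith
  next
    case 2
    have "y^2/2 - y^3/6 - y/6 = y*(y*(3-y) - 1)/6" by (simp add: field_simps power2_eq_square power3_eq_cube)
    moreover have "0 \<le> (y-1)*(2-y)" using 2 by simp
    then have "2 \<le> y*(3-y)" by (simp add: algebra_simps)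
    then have "0 \<le> y*(y*(3-y) - 1)" using 2 by simp
    ultimately have "y \<le> 6 * Mf y" using Mf_lower[OF assms] by linarith
    then show ?thesis by linarith
  next
    case 3 then show ?thesis using Mf_ge[of y] by linarith
  qed
qed

lemma Mf_scale_le: assumes "0 \<le> l" "0 \<le> u" shows "Mf (l*u) \<le> max l (l^2) * min u (u^2)"
proof -
  have a: "Mf (l*u) \<le> l*u" using assms by (intro Mf_le) simp
  have b: "Mf (l*u) \<le> l^2*u^2" using Mf_upper[of "l*u"] Mf_nonneg[of "l*u"] assms by (simp add: power_mult_distrib)
  show ?thesis
  proof (cases "u \<le> u^2")
    case True
    then have "l * u \<le> max l (l^2) * u" using assms by (intro mult_right_mono) auto
    then show ?thesis using a True by (simp add: min_def)
  next
    case False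
    then have "l^2 * u^2 \<le> max l (l^2) * u^2" by (intro mult_right_mono) auto
    then show ?thesis using b False Mf_nonneg[of "l*u"] by (simp add: min_def)
  qed
qed

lemma exp_pow_compare: assumes "0 \<le> y" "y \<le> 1/2"
  shows "\<bar>(1-y)^k - exp (- (real k * y))\<bar> \<le> 2 * real k * y^2"
proof -
  have up: "(1-y)^k \<le> exp (- (real k * y))"
  proof -
    have "(1-y)^k \<le> (exp (-y))^k" using assms exp_ge_add_one_self[of "-y"]
      by (intro power_mono) auto
    then show ?thesis by (simp add: exp_of_nat_mult[symmetric])
  qed
  have "- y - 2 * y^2 \<le> ln (1 - y)" by (rule ln_one_minus_pos_lower_bound) (use assms in auto)
  then have "exp (real k * (- y - 2 * y^2)) \<le> exp (real k * ln (1 - y))" by (intro exp_mono mult_left_mono) auto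
  also have "exp (real k * ln (1 - y)) = (1-y)^k" using assms by (simp add: exp_of_nat_mult)
  finally have lo1: "exp (- (real k * y)) * exp (- (2 * real k * y^2)) \<le> (1-y)^k"
    by (simp add: exp_add[symmetric] algebra_simps)
  have "1 - 2 * real k * y^2 \<le> exp (- (2 * real k * y^2))" using exp_ge_add_one_self[of "- (2 * real k * y^2)"] by simp
  then have "exp (- (real k * y)) * (1 - 2 * real k * y^2) \<le> exp (- (real k * y)) * exp (- (2 * real k * y^2))"
    by (intro mult_left_mono) auto
  with lo1 have lo: "exp (- (real k * y)) - exp (- (real k * y)) * (2 * real k * y^2) \<le> (1-y)^k"
    by (simp add: algebra_simps)
  have "exp (- (real k * y)) \<le> 1" using assms by simp
  then have "exp (- (real k * y)) * (2 * real k * y^2) \<le> 2 * real k * y^2"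
    by (intro mult_left_le_one_le) auto
  then show ?thesis using up lo by (simp add: abs_if)
qed

lemma Nf_Mf_compare: assumes "0 \<le> y" "y \<le> 1/2"
  shows "\<bar>Nf k y - Mf (real k * y)\<bar> \<le> 2 * real k * y^2"
  using exp_pow_compare[OF assms, of k] by (simp add: Nf_def Mf_def)

definition Uf :: "real \<Rightarrow> real" where "Uf v = v / (1 - v)"
definition Gf :: "real \<Rightarrow> real \<Rightarrow> real" where
  "Gf l v = (if v \<le> 0 then l^2 else if 1 \<le> v then l else Mf (l * Uf v) / Mf (Uf v))"

lemma Uf_phi: "0 \<le> u \<Longrightarrow> Uf (u / (1+u)) = u"
  by (simp add: Uf_def field_simps)

lemma Gf_phi: assumes "0 < u" shows "Gf l (u / (1+u)) = Mf (l*u) / Mf u"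
proof -
  have "\<not> u / (1+u) \<le> 0" "\<not> 1 \<le> u/(1+u)" using assms by (auto simp: field_simps)
  then show ?thesis using assms by (simp add: Gf_def Uf_phi)
qed

lemma ratio_lower: fixes A B a \<beta> :: real
  assumes "a \<le> A" "0 \<le> A" "0 < B" "B \<le> \<beta>" shows "a / \<beta> \<le> A / B"
proof (cases "a \<le> 0")
  case True
  then have "a / \<beta> \<le> 0" using assms by (simp add: divide_nonpos_pos)
  also have "0 \<le> A / B" using assms by simp
  finally show ?thesis .
next
  case False
  have "a / \<beta> \<le> a / B" using False assms by (intro divide_left_mono) auto
  also have "\<dots> \<le> A / B" using assms by (intro divide_right_mono) auto
  finally show ?thesis .
qed

lemma ratio_upper: fixes A B \<alpha> \<beta> :: real
  assumes "A \<le> \<alpha>" "0 \<le> \<alpha>" "0 < \<beta>" "\<beta> \<le> B" shows "A / B \<le> \<alpha> / \<beta>"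
proof -
  have "A / B \<le> \<alpha> / B" using assms by (intro divide_right_mono) auto
  also have "\<dots> \<le> \<alpha> / \<beta>" using assms by (intro divide_left_mono) auto
  finally show ?thesis .
qed

lemma G_small: assumes "0 \<le> l" "0 < u" "u \<le> 1"
  shows "l^2 * (1 - l*u/3) \<le> Mf (l*u) / Mf u" "Mf (l*u) / Mf u \<le> l^2 / (1 - u/3)"
proof -
  have A1: "(l*u)^2/2 - (l*u)^3/6 \<le> Mf (l*u)" using assms by (intro Mf_lower) simp
  have A2: "Mf (l*u) \<le> (l*u)^2/2" using assms by (intro Mf_upper) simp
  have B1: "u^2/2 - u^3/6 \<le> Mf u" using assms by (intro Mf_lower) simp
  have B2: "Mf u \<le> u^2/2" using assms by (intro Mf_upper) simp
  have Bpos: "0 < Mf u" using assms by (intro Mf_pos)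
  have e1: "(l*u)^2/2 - (l*u)^3/6 = (u^2/2) * (l^2 * (1 - l*u/3))"
    by (simp add: field_simps power2_eq_square power3_eq_cube)
  have "(u^2/2) * (l^2 * (1 - l*u/3)) / (u^2/2) \<le> Mf (l*u) / Mf u"
    using A1 e1 Bpos B2 by (intro ratio_lower) (auto simp: Mf_nonneg)
  then show "l^2 * (1 - l*u/3) \<le> Mf (l*u) / Mf u" using assms by simp
  have e2: "u^2/2 - u^3/6 = (u^2/2) * (1 - u/3)"
    by (simp add: field_simps power2_eq_square power3_eq_cube)
  have pos: "0 < (u^2/2) * (1 - u/3)" using assms by simp
  have A2': "Mf (l*u) \<le> (u^2/2) * l^2" using A2 by (simp add: power_mult_distrib algebra_simps)
  have "Mf (l*u) / Mf u \<le> ((u^2/2) * l^2) / ((u^2/2) * (1 - u/3))"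
    using A2' B1 e2 pos by (intro ratio_upper) (auto simp: power_mult_distrib)
  also have "\<dots> = l^2 / (1 - u/3)" using assms by simp
  finally show "Mf (l*u) / Mf u \<le> l^2 / (1 - u/3)" .
qed

lemma G_large: assumes "0 \<le> l" "1 < u"
  shows "l - 1/u \<le> Mf (l*u) / Mf u" "Mf (l*u) / Mf u \<le> l*u / (u - 1)"
proof -
  have Bpos: "0 < Mf u" using assms by (intro Mf_pos) simp
  have "(l*u - 1) / u \<le> Mf (l*u) / Mf u"
    using assms Bpos by (intro ratio_lower) (auto simp: Mf_nonneg Mf_ge Mf_le)
  then show "l - 1/u \<le> Mf (l*u) / Mf u" using assms by (simp add: diff_divide_distrib)
  show "Mf (l*u) / Mf u \<le> l*u / (u - 1)"
    using assms Bpos by (intro ratio_upper) (auto simp: Mf_ge Mf_le)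
qed

lemma Gf_bound: assumes "0 \<le> l" shows "\<bar>Gf l v\<bar> \<le> 6 * max l (l^2)"
proof -
  consider "v \<le> 0" | "1 \<le> v" | "0 < v" "v < 1" by linarith
  then show ?thesis
  proof cases
    case 3
    define U where "U = Uf v"
    have U: "0 < U" using 3 by (simp add: U_def Uf_def)
    have m: "0 < min U (U^2)" using U by simp
    have "Mf (l*U) / Mf U \<le> (max l (l^2) * min U (U^2)) / (min U (U^2) / 6)"
      using U m Mf_min[of U] assms by (intro ratio_upper Mf_scale_le assms) auto
    also have "\<dots> = 6 * max l (l^2)"
    proof -
      have gen: "\<And>a m::real. m \<noteq> 0 \<Longrightarrow> a*m/(m/6) = 6*a" by (simp add: field_simps)
      show ?thesis using m by (intro gen) linarith
    qed
    finally have "Mf (l*U) / Mf U \<le> 6 * max l (l^2)" .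
    moreover have "0 \<le> Mf (l*U) / Mf U" by (simp add: Mf_nonneg)
    ultimately show ?thesis using 3 by (simp add: Gf_def U_def)
  qed (use assms in \<open>auto simp: Gf_def\<close>)
qed

lemma isCont_clamp:
  fixes f :: "real \<Rightarrow> real"
  assumes f: "continuous_on {0<..<1} f" "(f \<longlongrightarrow> a) (at_right 0)" "(f \<longlongrightarrow> c) (at_left 1)"
  shows "isCont (\<lambda>v. if v \<le> 0 then a else if 1 \<le> v then c else f v) x"
proof -
  define g where "g = (\<lambda>v::real. if v \<le> 0 then a else if 1 \<le> v then c else f v)"
  have "isCont g x"
  proof -
    consider "x < 0" | "x = 0" | "0 < x" "x < 1" | "x = 1" | "1 < x" by linarith
    then show ?thesis
    proof cases
      case 1
      have "eventually (\<lambda>v. v \<in> {..<0}) (nhds x)" using 1 by (intro eventually_nhds_in_open) auto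
      then have "eventually (\<lambda>v. g v = a) (nhds x)" by eventually_elim (auto simp: g_def)
      then show ?thesis by (subst isCont_cong) auto
    next
      case 5
      have "eventually (\<lambda>v. v \<in> {1<..}) (nhds x)" using 5 by (intro eventually_nhds_in_open) auto
      then have "eventually (\<lambda>v. g v = c) (nhds x)" by eventually_elim (auto simp: g_def)
      then show ?thesis by (subst isCont_cong) auto
    next
      case 3
      have "eventually (\<lambda>v. v \<in> {0<..<1}) (nhds x)" using 3 by (intro eventually_nhds_in_open) auto
      then have ev: "eventually (\<lambda>v. g v = f v) (nhds x)" by eventually_elim (auto simp: g_def)
      have "isCont f x" using f(1) 3 by (intro continuous_on_interior[of "{0<..<1}"]) auto
      then show ?thesis using ev by (subst isCont_cong) auto
    next
      case 2
      have l: "(g \<longlongrightarrow> a) (at_left 0)"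
      proof -
        have "eventually (\<lambda>v. v \<in> {-1<..<0}) (at_left (0::real))" by (rule eventually_at_left_real) simp
        then have "eventually (\<lambda>v. a = g v) (at_left (0::real))" by eventually_elim (auto simp: g_def)
        then show ?thesis using tendsto_cong[of "\<lambda>_. a" g] by auto
      qed
      have r: "(g \<longlongrightarrow> a) (at_right 0)"
      proof -
        have "eventually (\<lambda>v. v \<in> {0<..<1}) (at_right (0::real))" by (rule eventually_at_right_real) simp
        then have "eventually (\<lambda>v. f v = g v) (at_right (0::real))" by eventually_elim (auto simp: g_def)
        then show ?thesis using tendsto_cong[of f g] f(2) by auto
      qed
      show ?thesis unfolding isCont_def using filterlim_split_at[OF l r] 2 by (simp add: g_def)
    next
      case 4
      have l: "(g \<longlongrightarrow> c) (at_left 1)"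
      proof -
        have "eventually (\<lambda>v. v \<in> {0<..<1}) (at_left (1::real))" by (rule eventually_at_left_real) simp
        then have "eventually (\<lambda>v. f v = g v) (at_left (1::real))" by eventually_elim (auto simp: g_def)
        then show ?thesis using tendsto_cong[of f g] f(3) by auto
      qed
      have r: "(g \<longlongrightarrow> c) (at_right 1)"
      proof -
        have "eventually (\<lambda>v. v \<in> {1<..<2}) (at_right (1::real))" by (rule eventually_at_right_real) simp
        then have "eventually (\<lambda>v. c = g v) (at_right (1::real))" by eventually_elim (auto simp: g_def)
        then show ?thesis using tendsto_cong[of "\<lambda>_. c" g] by auto
      qed
      show ?thesis unfolding isCont_def using filterlim_split_at[OF l r] 4 by (simp add: g_def)
    qed
  qed
  then show ?thesis by (simp add: g_def)
qed

lemma Gf_isCont: assumes "0 \<le> l" shows "isCont (Gf l) x"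
proof -
  define F where "F v = Mf (l * Uf v) / Mf (Uf v)" for v
  have Gf_eq: "Gf l = (\<lambda>v. if v \<le> 0 then l^2 else if 1 \<le> v then l else F v)"
    by (auto simp: Gf_def F_def fun_eq_iff)
  have cont: "continuous_on {0<..<1} F"
  proof -
    have "\<forall>v\<in>{0<..<1}. Mf (Uf v) \<noteq> 0"
      by (auto intro!: Mf_pos[THEN less_imp_neq, symmetric] simp: Uf_def)
    then show ?thesis unfolding F_def Mf_def Uf_def
      by (auto intro!: continuous_intros)
  qed
  have lim0: "(F \<longlongrightarrow> l^2) (at_right 0)"
  proof (rule tendsto_sandwich)
    have "eventually (\<lambda>v. v \<in> {0<..<1/2}) (at_right (0::real))" by (rule eventually_at_right_real) simp
    then show "eventually (\<lambda>v. l^2 * (1 - l * (v/(1-v))/3) \<le> F v) (at_right 0)"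
    proof eventually_elim
      case (elim v)
      have U: "0 < v/(1-v)" "v/(1-v) \<le> 1" using elim by (auto simp: field_simps)
      show ?case using G_small[OF assms U] by (simp add: F_def Uf_def)
    qed
    from \<open>eventually (\<lambda>v. v \<in> {0<..<1/2}) (at_right (0::real))\<close>
    show "eventually (\<lambda>v. F v \<le> l^2 / (1 - (v/(1-v))/3)) (at_right 0)"
    proof eventually_elim
      case (elim v)
      have U: "0 < v/(1-v)" "v/(1-v) \<le> 1" using elim by (auto simp: field_simps)
      show ?case using G_small[OF assms U] by (simp add: F_def Uf_def)
    qed
    have "((\<lambda>v::real. l^2 * (1 - l * (v/(1-v))/3)) \<longlongrightarrow> l^2 * (1 - l * (0/(1-0))/3)) (at 0)"
      by (intro tendsto_intros) auto
    then show "((\<lambda>v::real. l^2 * (1 - l * (v/(1-v))/3)) \<longlongrightarrow> l^2) (at_right 0)"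
      by (auto intro: tendsto_mono[OF at_le])
    have "((\<lambda>v::real. l^2 / (1 - (v/(1-v))/3)) \<longlongrightarrow> l^2 / (1 - (0/(1-0))/3)) (at 0)"
      by (intro tendsto_intros) auto
    then show "((\<lambda>v::real. l^2 / (1 - (v/(1-v))/3)) \<longlongrightarrow> l^2) (at_right 0)"
      by (auto intro: tendsto_mono[OF at_le])
  qed
  have lim1: "(F \<longlongrightarrow> l) (at_left 1)"
  proof (rule tendsto_sandwich)
    have "eventually (\<lambda>v. v \<in> {3/4<..<1}) (at_left (1::real))" by (rule eventually_at_left_real) simp
    then show "eventually (\<lambda>v. l - (1-v)/v \<le> F v) (at_left 1)"
    proof eventually_elim
      case (elim v)
      have U: "1 < v/(1-v)" using elim by (auto simp: field_simps)
      have "1 / (v/(1-v)) = (1-v)/v" by simp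
      then show ?case using G_large(1)[OF assms U] by (simp add: F_def Uf_def)
    qed
    from \<open>eventually (\<lambda>v. v \<in> {3/4<..<1}) (at_left (1::real))\<close>
    show "eventually (\<lambda>v. F v \<le> l * v / (2 * v - 1)) (at_left 1)"
    proof eventually_elim
      case (elim v)
      have U: "1 < v/(1-v)" using elim by (auto simp: field_simps)
      have d: "v/(1-v) - 1 = (2 * v - 1)/(1-v)" using elim by (simp add: field_simps)
      have e: "l * (v/(1-v)) / (v/(1-v) - 1) = l * v / (2 * v - 1)" unfolding d using elim by simp
      have f: "F v = Mf (l * (v/(1-v))) / Mf (v/(1-v))" by (simp add: F_def Uf_def)
      show ?case using G_large(2)[OF assms U] e f by linarith
    qed
    have "((\<lambda>v::real. l - (1-v)/v) \<longlongrightarrow> l - (1-1)/1) (at 1)"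
      by (intro tendsto_intros) auto
    then show "((\<lambda>v::real. l - (1-v)/v) \<longlongrightarrow> l) (at_left 1)"
      by (auto intro: tendsto_mono[OF at_le])
    have "((\<lambda>v::real. l * v / (2 * v - 1)) \<longlongrightarrow> l * 1 / (2 * 1 - 1)) (at 1)"
      by (intro tendsto_intros) auto
    then show "((\<lambda>v::real. l * v / (2 * v - 1)) \<longlongrightarrow> l) (at_left 1)"
      by (auto intro: tendsto_mono[OF at_le])
  qed
  show ?thesis unfolding Gf_eq by (rule isCont_clamp[OF cont lim0 lim1])
qed

lemma Gf_0[simp]: "Gf 0 v = 0" by (simp add: Gf_def)

lemma kernel_small:
  fixes l u \<delta> y :: real and k :: nat
  assumes l: "0 < l" and k: "2 \<le> k" and y: "0 < y" and ly: "l * y \<le> 1" and y1: "y \<le> 1"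
    and u: "u = real k * y" and d: "u \<le> \<delta>" "\<delta> \<le> 1"
  shows "\<bar>Nf k (l*y) - Nf k y * (Mf (l*u) / Mf u)\<bar> \<le> (l^2 * (1+l) * \<delta>) * Nf k y"
proof -
  define C where "C = real k * (real k - 1) / 2"
  have C: "0 < C" using k by (simp add: C_def)
  have up: "0 < u" using u k y by simp
  have N1: "C * (l*y)^2 * (1 - l * \<delta> / 3) \<le> Nf k (l*y)" "Nf k (l*y) \<le> C * (l*y)^2"
  proof -
    have lo: "real k * (real k - 1) / 2 * (l*y)^2 - real k * (real k - 1) * (real k - 2) / 6 * (l*y)^3 \<le> Nf k (l*y)"
      using Nf_lower[of "l*y" k] l y ly by simp
    have e: "real k * (real k - 1) * (real k - 2) / 6 * (l*y)^3 = C * (l*y)^2 * ((real k - 2) * (l*y) / 3)"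
      by (simp add: C_def field_simps power2_eq_square power3_eq_cube)
    have "(real k - 2) * (l*y) \<le> real k * (l*y)" using l y by (simp add: mult_right_mono)
    also have "\<dots> = l * u" using u by simp
    also have "\<dots> \<le> l * \<delta>" using d l by simp
    finally have "(real k - 2) * (l*y) / 3 \<le> l * \<delta> / 3" by simp
    then have "C * (l*y)^2 * ((real k - 2) * (l*y) / 3) \<le> C * (l*y)^2 * (l * \<delta> / 3)"
      using C by (intro mult_left_mono) auto
    moreover have "C*(l*y)^2 - C*(l*y)^2*((real k - 2) * (l*y) / 3) \<le> Nf k (l*y)"
      using lo unfolding e C_def[symmetric] .
    moreover have "C*(l*y)^2*(1 - l*\<delta>/3) = C*(l*y)^2 - C*(l*y)^2*(l*\<delta>/3)" by (simp add: right_diff_distrib)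
    ultimately show "C * (l*y)^2 * (1 - l * \<delta> / 3) \<le> Nf k (l*y)" by linarith
    show "Nf k (l*y) \<le> C * (l*y)^2" using Nf_upper[of "l*y" k] l y ly by (simp add: C_def)
  qed
  have N2: "C * y^2 * (1 - \<delta> / 3) \<le> Nf k y" "Nf k y \<le> C * y^2"
  proof -
    have lo: "real k * (real k - 1) / 2 * y^2 - real k * (real k - 1) * (real k - 2) / 6 * y^3 \<le> Nf k y"
      using Nf_lower[of y k] y y1 by simp
    have e: "real k * (real k - 1) * (real k - 2) / 6 * y^3 = C * y^2 * ((real k - 2) * y / 3)"
      by (simp add: C_def field_simps power2_eq_square power3_eq_cube)
    have "(real k - 2) * y \<le> real k * y" using y by (simp add: mult_right_mono)
    also have "\<dots> \<le> \<delta>" using d u by simp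
    finally have "(real k - 2) * y / 3 \<le> \<delta> / 3" by simp
    then have "C * y^2 * ((real k - 2) * y / 3) \<le> C * y^2 * (\<delta> / 3)"
      using C by (intro mult_left_mono) auto
    moreover have "C*y^2 - C*y^2*((real k - 2) * y / 3) \<le> Nf k y"
      using lo unfolding e C_def[symmetric] .
    moreover have "C*y^2*(1 - \<delta>/3) = C*y^2 - C*y^2*(\<delta>/3)" by (simp add: right_diff_distrib)
    ultimately show "C * y^2 * (1 - \<delta> / 3) \<le> Nf k y" by linarith
    show "Nf k y \<le> C * y^2" using Nf_upper[of y k] y y1 by (simp add: C_def)
  qed
  have Cy: "0 < C * y^2" using C y by simp
  have d3: "0 < 1 - \<delta>/3" using d by simp
  have N2pos: "0 < Nf k y" using N2(1) Cy d3 by (smt (verit) mult_pos_pos)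
  define R where "R = Nf k (l*y) / Nf k y"
  have R1: "l^2 * (1 - l * \<delta> / 3) \<le> R"
  proof -
    have "(C * y^2) * (l^2 * (1 - l * \<delta> / 3)) / (C * y^2) \<le> R" unfolding R_def
      using N1(1) N2pos N2(2) Nf_nonneg[of "l*y" k] l y ly
      by (intro ratio_lower) (auto simp: power_mult_distrib algebra_simps)
    moreover have "(C * y^2) * (l^2 * (1 - l * \<delta> / 3)) / (C * y^2) = l^2 * (1 - l * \<delta> / 3)"
      using Cy by (intro nonzero_mult_div_cancel_left) (use C y in simp)
    ultimately show ?thesis by simp
  qed
  have R2: "R \<le> l^2 / (1 - \<delta>/3)"
  proof -
    have a1: "Nf k (l*y) \<le> C*y^2*l^2" using N1(2) by (simp add: power_mult_distrib algebra_simps)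
    have a2: "0 \<le> C*y^2*l^2" using Cy by simp
    have a3: "0 < C*y^2*(1-\<delta>/3)" using Cy d3 by simp
    have "R \<le> (C * y^2 * l^2) / (C * y^2 * (1 - \<delta> / 3))" unfolding R_def
      by (rule ratio_upper[OF a1 a2 a3 N2(1)])
    then show ?thesis using C y by simp
  qed
  have u1: "u \<le> 1" using d by simp
  have G1: "l^2 * (1 - l * \<delta> / 3) \<le> Mf (l*u) / Mf u"
  proof -
    have "l^2 * (1 - l * \<delta> / 3) \<le> l^2 * (1 - l*u/3)" using d l by (intro mult_left_mono) auto
    moreover have "l^2 * (1 - l*u/3) \<le> Mf (l*u) / Mf u" using G_small(1)[of l u] l up u1 by simp
    ultimately show ?thesis by linarith
  qed
  have G2: "Mf (l*u) / Mf u \<le> l^2 / (1 - \<delta>/3)"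
  proof -
    have "l^2 / (1 - u/3) \<le> l^2 / (1 - \<delta>/3)" using d l d3 by (intro divide_left_mono) auto
    moreover have "Mf (l*u) / Mf u \<le> l^2 / (1 - u/3)" using G_small(2)[of l u] l up u1 by simp
    ultimately show ?thesis by linarith
  qed
  have "\<bar>R - Mf (l*u) / Mf u\<bar> \<le> l^2 / (1 - \<delta>/3) - l^2 * (1 - l * \<delta> / 3)"
    using R1 R2 G1 G2 by linarith
  also have "\<dots> = l^2 * \<delta> / (3 - \<delta>) + l^3 * \<delta> / 3" using d3 by (simp add: field_simps power2_eq_square power3_eq_cube)
  also have "\<dots> \<le> l^2 * \<delta> + l^3 * \<delta>"
  proof -
    have "l^2 * \<delta> / (3 - \<delta>) \<le> l^2 * \<delta> / 1" using d l up by (intro divide_left_mono) auto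
    moreover have "l^3 * \<delta> / 3 \<le> l^3 * \<delta>" using d l up by simp
    ultimately show ?thesis by linarith
  qed
  also have "\<dots> = l^2 * (1+l) * \<delta>" by (simp add: algebra_simps power2_eq_square power3_eq_cube)
  finally have fin: "\<bar>R - Mf (l*u) / Mf u\<bar> \<le> l^2 * (1+l) * \<delta>" .
  have "Nf k (l*y) - Nf k y * (Mf (l*u) / Mf u) = Nf k y * (R - Mf (l*u) / Mf u)"
    using N2pos by (simp add: R_def algebra_simps)
  then have "\<bar>Nf k (l*y) - Nf k y * (Mf (l*u) / Mf u)\<bar> = Nf k y * \<bar>R - Mf (l*u) / Mf u\<bar>"
    using N2pos by (simp add: abs_mult)
  also have "\<dots> \<le> Nf k y * (l^2 * (1+l) * \<delta>)" using fin N2pos by (intro mult_left_mono) auto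
  finally show ?thesis by (simp add: mult.commute)
qed

lemma kernel_large:
  fixes l u \<delta> b \<epsilon> :: real and k :: nat
  assumes l: "0 < l" and b: "2 * l \<le> b" "2 \<le> b" and d: "0 < \<delta>" "\<delta> \<le> 1"
    and u: "u = real k / b" "\<delta> < u" and e: "0 < \<epsilon>"
    and b1: "24 / \<delta> \<le> b" and b2: "12 * (2*l^2 + 12*l/\<delta>) / (\<epsilon>*\<delta>) \<le> b"
  shows "\<bar>Nf k (l/b) - Nf k (1/b) * (Mf (l*u) / Mf u)\<bar> \<le> \<epsilon> * Nf k (1/b)"
proof -
  have bp: "0 < b" using b by simp
  have up: "0 < u" using u d by simp
  have y1: "0 \<le> l/b" "l/b \<le> 1/2" using l b bp by (auto simp: field_simps)
  have y2: "0 \<le> 1/b" "1/b \<le> 1/2" using b bp by (auto simp: field_simps)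
  have E1: "\<bar>Nf k (l/b) - Mf (l*u)\<bar> \<le> 2*l^2*u/b"
  proof -
    have "\<bar>Nf k (l/b) - Mf (real k * (l/b))\<bar> \<le> 2 * real k * (l/b)^2" by (rule Nf_Mf_compare[OF y1])
    moreover have "real k * (l/b) = l*u" using u by simp
    moreover have "2 * real k * (l/b)^2 = 2*l^2*u/b" using u bp by (simp add: power2_eq_square field_simps)
    ultimately show ?thesis by simp
  qed
  have E2: "\<bar>Nf k (1/b) - Mf u\<bar> \<le> 2*u/b"
  proof -
    have "\<bar>Nf k (1/b) - Mf (real k * (1/b))\<bar> \<le> 2 * real k * (1/b)^2" by (rule Nf_Mf_compare[OF y2])
    moreover have "real k * (1/b) = u" using u by simp
    moreover have "2 * real k * (1/b)^2 = 2*u/b" using u bp by (simp add: power2_eq_square field_simps)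
    ultimately show ?thesis by simp
  qed
  have M2: "\<delta>*u/6 \<le> Mf u"
  proof -
    have a: "\<delta>*u \<le> u" using d up by (simp add: mult_le_cancel_right1)
    have "\<delta>*u \<le> u*u" using u(2) up by (intro mult_right_mono) auto
    then have "\<delta>*u \<le> u^2" by (simp add: power2_eq_square)
    with a have "\<delta>*u \<le> min u (u^2)" by (simp add: min_def)
    then show ?thesis using Mf_min[of u] up by linarith
  qed
  have M2pos: "0 < Mf u" using up by (rule Mf_pos)
  have small: "2*u/b \<le> \<delta>*u/12"
  proof -
    have "1/b \<le> \<delta>/24" using b1 d bp by (simp add: field_simps)
    then have "u * (1/b) \<le> u * (\<delta>/24)" using up by (intro mult_left_mono) auto
    moreover have "2*u/b = 2*(u*(1/b))" "\<delta>*u/12 = 2*(u*(\<delta>/24))" by simp_all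
    ultimately show ?thesis by linarith
  qed
  have N2: "\<delta>*u/12 \<le> Nf k (1/b)" using E2 M2 small by linarith
  have M1: "Mf (l*u) \<le> l*u" using l up by (intro Mf_le) simp
  have M1n: "0 \<le> Mf (l*u)" by (rule Mf_nonneg)
  have q: "Mf (l*u) / Mf u \<le> (l*u) / (\<delta>*u/6)"
    using M1 M2 M2pos l up d by (intro ratio_upper) auto
  also have "\<dots> = 6*l/\<delta>" using up d by (simp add: field_simps)
  finally have q: "Mf (l*u) / Mf u \<le> 6*l/\<delta>" .
  have qn: "0 \<le> Mf (l*u) / Mf u" using M1n M2pos by simp
  have "Nf k (l/b) - Nf k (1/b) * (Mf (l*u) / Mf u)
      = (Nf k (l/b) - Mf (l*u)) + (Mf (l*u) / Mf u) * (Mf u - Nf k (1/b))"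
    using M2pos by (simp add: field_simps)
  moreover have "\<bar>(Mf (l*u) / Mf u) * (Mf u - Nf k (1/b))\<bar> = (Mf (l*u) / Mf u) * \<bar>Mf u - Nf k (1/b)\<bar>"
    using qn by (simp only: abs_mult abs_of_nonneg)
  ultimately have "\<bar>Nf k (l/b) - Nf k (1/b) * (Mf (l*u) / Mf u)\<bar>
      \<le> \<bar>Nf k (l/b) - Mf (l*u)\<bar> + (Mf (l*u) / Mf u) * \<bar>Mf u - Nf k (1/b)\<bar>"
    by (metis abs_triangle_ineq)
  also have "\<dots> \<le> 2*l^2*u/b + (6*l/\<delta>) * (2*u/b)"
    using E1 E2 q qn by (intro add_mono mult_mono) (auto simp: abs_minus_commute)
  also have "\<dots> = u * ((2*l^2 + 12*l/\<delta>) / b)" using d bp by (simp add: field_simps)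
  also have "\<dots> \<le> u * (\<epsilon>*\<delta>/12)"
  proof -
    have "(2*l^2 + 12*l/\<delta>) / b \<le> \<epsilon>*\<delta>/12"
      using b2 bp e d by (simp add: field_simps)
    then show ?thesis using up by (intro mult_left_mono) auto
  qed
  also have "\<dots> = \<epsilon> * (\<delta>*u/12)" by simp
  also have "\<dots> \<le> \<epsilon> * Nf k (1/b)" using N2 e by (intro mult_left_mono) auto
  finally show ?thesis .
qed

lemma kernel:
  fixes l \<epsilon> :: real
  assumes l: "0 \<le> l" and e: "0 < \<epsilon>"
  shows "\<exists>B>0. \<forall>b\<ge>B. \<forall>k. \<bar>Nf k (l/b) - Nf k (1/b) * Gf l ((real k / b) / (1 + real k / b))\<bar>
           \<le> \<epsilon> * Nf k (1/b)"
proof (cases "l = 0")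
  case True
  show ?thesis
  proof (intro exI[of _ 1] conjI allI impI)
    fix b :: real and k assume "1 \<le> b"
    then have "0 \<le> Nf k (1/b)" by (intro Nf_nonneg) auto
    then show "\<bar>Nf k (l/b) - Nf k (1/b) * Gf l ((real k / b) / (1 + real k / b))\<bar> \<le> \<epsilon> * Nf k (1/b)"
      using True e by simp
  qed simp
next
  case False
  then have l: "0 < l" using l by simp
  define \<delta> where "\<delta> = min 1 (\<epsilon> / (l^2 * (1+l)))"
  have d: "0 < \<delta>" "\<delta> \<le> 1" using l e by (auto simp: \<delta>_def)
  have dd: "l^2 * (1+l) * \<delta> \<le> \<epsilon>"
  proof -
    have pos: "0 < l^2 * (1+l)" using l by simp
    have "\<delta> \<le> \<epsilon> / (l^2 * (1+l))" by (simp add: \<delta>_def)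
    then have "\<delta> * (l^2 * (1+l)) \<le> \<epsilon>" using pos by (simp add: pos_le_divide_eq)
    then show ?thesis by (simp add: mult.commute)
  qed
  define B where "B = 2 + 2*l + 24/\<delta> + 12 * (2*l^2 + 12*l/\<delta>) / (\<epsilon>*\<delta>)"
  have B0: "0 \<le> 24/\<delta>" "0 \<le> 12 * (2*l^2 + 12*l/\<delta>) / (\<epsilon>*\<delta>)" using d l e by auto
  show ?thesis
  proof (intro exI[of _ B] conjI allI impI)
    show "0 < B" unfolding B_def using B0 l by linarith
    fix b :: real and k assume bB: "B \<le> b"
    have bB': "2 + 2*l + 24/\<delta> + 12 * (2*l^2 + 12*l/\<delta>) / (\<epsilon>*\<delta>) \<le> b" using bB by (simp only: B_def)
    have b: "2 \<le> b" "2*l \<le> b" "24/\<delta> \<le> b" "12 * (2*l^2 + 12*l/\<delta>) / (\<epsilon>*\<delta>) \<le> b"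
      using bB' B0 l by linarith+
    have bp: "0 < b" using b by simp
    show "\<bar>Nf k (l/b) - Nf k (1/b) * Gf l ((real k / b) / (1 + real k / b))\<bar> \<le> \<epsilon> * Nf k (1/b)"
    proof (cases "k \<ge> 2")
      case False
      then have "k = 0 \<or> k = 1" by auto
      then show ?thesis by (auto simp: Nf_def)
    next
      case True
      define u where "u = real k / b"
      have up: "0 < u" using True bp by (simp add: u_def)
      have G: "Gf l ((real k / b) / (1 + real k / b)) = Mf (l*u) / Mf u"
        using Gf_phi[OF up] by (simp add: u_def)
      show ?thesis
      proof (cases "u \<le> \<delta>")
        case True2: True
        have "\<bar>Nf k (l*(1/b)) - Nf k (1/b) * (Mf (l*u) / Mf u)\<bar> \<le> (l^2 * (1+l) * \<delta>) * Nf k (1/b)"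
          using bp b l by (intro kernel_small[OF l True _ _ _ _ True2 d(2)]) (auto simp: u_def field_simps)
        also have "\<dots> \<le> \<epsilon> * Nf k (1/b)"
          using dd Nf_nonneg[of "1/b" k] b by (intro mult_right_mono) auto
        finally show ?thesis using G by simp
      next
        case False
        then have "\<delta> < u" by simp
        then show ?thesis using G kernel_large[OF l b(2,1) d u_def _ e b(3,4)] by simp
      qed
    qed
  qed
qed

lemma Uf_pos: "0 < v \<Longrightarrow> v < 1 \<Longrightarrow> 0 < Uf v" by (simp add: Uf_def)

lemma Uf_meas[measurable]: "Uf \<in> borel_measurable borel" unfolding Uf_def by measurable
lemma Mf_meas[measurable]: "Mf \<in> borel_measurable borel" unfolding Mf_def by measurable

lemma min_mono_sq: fixes a U :: real assumes "0 < a" "a \<le> U" shows "min a (a^2) \<le> min U (U^2)"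
proof -
  have "a^2 \<le> U^2" using assms by (intro power_mono) auto
  then have "min a (a^2) \<le> U" "min a (a^2) \<le> U^2" using assms by linarith+
  then show ?thesis by simp
qed

lemma le_ennreal_fin: "(x::ennreal) \<le> ennreal r \<Longrightarrow> x \<noteq> \<infinity>"
  by (auto simp: top_unique)

lemma D_bound_t: fixes t U m0 :: real
  assumes t: "0 < t" and m0: "0 \<le> m0" and U: "0 < U" "t < U"
  shows "m0 / Mf U \<le> 6 * m0 / min t (t^2)"
proof -
  define q where "q = min t (t^2)"
  have mt: "0 < q" using t by (simp add: q_def)
  have Mp: "0 < Mf U" using U by (intro Mf_pos)
  have "q \<le> min U (U^2)" unfolding q_def using U t by (intro min_mono_sq) auto
  also have "\<dots> \<le> 6 * Mf U" using Mf_min[of U] U by simp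
  finally have mm: "q / 6 \<le> Mf U" by simp
  have pos: "0 < Mf U * (q / 6)" using Mp mt by simp
  have "m0 / Mf U \<le> m0 / (q / 6)" by (rule divide_left_mono[OF mm m0 pos])
  also have "\<dots> = 6 * m0 / q" by simp
  finally show ?thesis by (simp add: q_def)
qed

lemma final_repr:
  fixes M :: "real measure" and m0 :: real
  assumes M: "real_distribution M" and m0: "0 \<le> m0"
  shows "\<exists>\<theta> d (\<Lambda>::real measure). \<theta> \<ge> 0 \<and> sets \<Lambda> = sets borel \<and> emeasure \<Lambda> {..0} = 0 \<and>
           sigma_finite_measure \<Lambda> \<and> (\<integral>\<^sup>+ u. ennreal (min u (u^2)) \<partial>\<Lambda>) < \<infinity> \<and>
           (\<forall>lam\<ge>0. m0 * (\<integral>v. Gf lam v \<partial>M) = \<theta>*lam^2 + d*lam + (\<integral>u. (exp (- lam * u) - 1 + lam * u) \<partial>\<Lambda>))"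
proof -
  interpret real_distribution M by (rule M)
  define D where "D v = indicator {0<..<1} v * m0 / Mf (Uf v)" for v :: real
  have D_meas[measurable]: "D \<in> borel_measurable borel" unfolding D_def by measurable
  have D_M[measurable]: "D \<in> borel_measurable M" by (simp add: measurable_cong_sets[OF events_eq_borel refl])
  have D_in: "v \<in> {0<..<1} \<Longrightarrow> D v = m0 / Mf (Uf v)" for v by (simp add: D_def)
  have D_out: "v \<notin> {0<..<1} \<Longrightarrow> D v = 0" for v by (simp add: D_def)
  have e1: "emeasure M UNIV = 1" using emeasure_space_1 by (metis space_eq_univ)
  have D_nn: "0 \<le> D v" for v
    by (cases "v \<in> {0<..<1}") (auto simp: D_in D_out m0 Mf_pos Uf_pos less_imp_le)
  define Dn where "Dn = density M (\<lambda>v. ennreal (D v))"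
  define \<Lambda> where "\<Lambda> = distr Dn borel Uf"
  have sDn: "sets Dn = sets borel" by (simp add: Dn_def)
  have Uf_Dn[measurable]: "Uf \<in> measurable Dn borel" by (simp add: measurable_cong_sets[OF sDn refl])
  have sL: "sets \<Lambda> = sets borel" by (simp add: \<Lambda>_def)
  have spL: "space \<Lambda> = UNIV" by (simp add: \<Lambda>_def)
  have emL: "emeasure \<Lambda> A = (\<integral>\<^sup>+ v. ennreal (D v) * indicator (Uf -` A) v \<partial>M)" if A[measurable]: "A \<in> sets borel" for A
  proof -
    have "emeasure \<Lambda> A = emeasure Dn (Uf -` A \<inter> space Dn)" unfolding \<Lambda>_def by (rule emeasure_distr) auto
    also have "\<dots> = emeasure Dn (Uf -` A)" by (simp add: Dn_def)
    also have "\<dots> = (\<integral>\<^sup>+ v. ennreal (D v) * indicator (Uf -` A) v \<partial>M)" unfolding Dn_def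
      using measurable_sets[OF Uf_meas A]
      by (intro emeasure_density) (auto simp: measurable_cong_sets[OF events_eq_borel refl])
    finally show ?thesis .
  qed
  have L0: "emeasure \<Lambda> {..0} = 0"
  proof -
    have "(\<integral>\<^sup>+ v. ennreal (D v) * indicator (Uf -` {..0}) v \<partial>M) = (\<integral>\<^sup>+ v. 0 \<partial>M)"
    proof (rule nn_integral_cong)
      fix v show "ennreal (D v) * indicator (Uf -` {..0}) v = 0"
        by (cases "v \<in> {0<..<1}") (auto simp: D_out indicator_def dest: Uf_pos)
    qed
    then show ?thesis using emL[of "{..0}"] by simp
  qed
  have fin: "(\<integral>\<^sup>+ u. ennreal (min u (u^2)) \<partial>\<Lambda>) < \<infinity>"
  proof -
    have "(\<integral>\<^sup>+ u. ennreal (min u (u^2)) \<partial>\<Lambda>) = (\<integral>\<^sup>+ v. ennreal (min (Uf v) ((Uf v)^2)) \<partial>Dn)"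
      unfolding \<Lambda>_def by (rule nn_integral_distr) auto
    also have "\<dots> = (\<integral>\<^sup>+ v. ennreal (D v) * ennreal (min (Uf v) ((Uf v)^2)) \<partial>M)"
      unfolding Dn_def by (rule nn_integral_density) auto
    also have "\<dots> \<le> (\<integral>\<^sup>+ v. ennreal (6 * m0) \<partial>M)"
    proof (rule nn_integral_mono)
      fix v
      show "ennreal (D v) * ennreal (min (Uf v) ((Uf v)^2)) \<le> ennreal (6 * m0)"
      proof (cases "v \<in> {0<..<1}")
        case True
        then have U: "0 < Uf v" by (auto intro: Uf_pos)
        have Mp: "0 < Mf (Uf v)" using U by (rule Mf_pos)
        have "D v * min (Uf v) ((Uf v)^2) = m0 * (min (Uf v) ((Uf v)^2) / Mf (Uf v))"
          using True by (simp add: D_in)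
        also have "\<dots> \<le> m0 * 6"
          using Mf_min[of "Uf v"] U Mp m0 by (intro mult_left_mono) (auto simp: divide_le_eq)
        finally have "D v * min (Uf v) ((Uf v)^2) \<le> 6 * m0" by simp
        moreover have "ennreal (D v) * ennreal (min (Uf v) ((Uf v)^2)) = ennreal (D v * min (Uf v) ((Uf v)^2))"
          using D_nn[of v] by (simp add: ennreal_mult')
        ultimately show ?thesis by (simp add: ennreal_leI)
      next
        case False then show ?thesis by (simp add: D_out)
      qed
    qed
    also have "\<dots> = ennreal (6 * m0)" by (simp add: e1)
    also have "\<dots> < \<infinity>" by simp
    finally show ?thesis .
  qed
  have sf: "sigma_finite_measure \<Lambda>"
  proof
    define A where "A = insert {..0::real} (range (\<lambda>j::nat. {1 / real (Suc j)<..}))"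
    have "countable A" by (simp add: A_def)
    moreover have "A \<subseteq> sets \<Lambda>" by (auto simp: A_def sL)
    moreover have "\<Union>A = space \<Lambda>"
    proof -
      have "x \<in> \<Union>A" for x :: real
      proof (cases "x \<le> 0")
        case True then show ?thesis by (auto simp: A_def)
      next
        case False
        then obtain j where "inverse (real (Suc j)) < x" using reals_Archimedean[of x] by force
        then show ?thesis by (auto simp: A_def inverse_eq_divide)
      qed
      then show ?thesis by (auto simp: spL)
    qed
    moreover have "\<forall>a\<in>A. emeasure \<Lambda> a \<noteq> \<infinity>"
    proof
      fix a assume "a \<in> A"
      then consider "a = {..0}" | j where "a = {1 / real (Suc j)<..}" by (auto simp: A_def)
      then show "emeasure \<Lambda> a \<noteq> \<infinity>"
      proof cases
        case 1 then show ?thesis using L0 by simp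
      next
        case (2 j)
        define t where "t = 1 / real (Suc j)"
        have t: "0 < t" by (simp add: t_def)
        have mt: "0 < min t (t^2)" using t by simp
        have "emeasure \<Lambda> a = (\<integral>\<^sup>+ v. ennreal (D v) * indicator (Uf -` {t<..}) v \<partial>M)"
          using emL[of "{t<..}"] 2 by (simp add: t_def)
        also have "\<dots> \<le> (\<integral>\<^sup>+ v. ennreal (6 * m0 / min t (t^2)) \<partial>M)"
        proof (rule nn_integral_mono)
          fix v
          show "ennreal (D v) * indicator (Uf -` {t<..}) v \<le> ennreal (6 * m0 / min t (t^2))"
          proof (cases "v \<in> {0<..<1} \<and> t < Uf v")
            case True
            then have U: "0 < Uf v" using t by simp
            have "D v = m0 / Mf (Uf v)" using True by (simp add: D_in)
            also have "\<dots> \<le> 6 * m0 / min t (t^2)" using True t m0 U by (intro D_bound_t) auto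
            finally have Dle: "D v \<le> 6 * m0 / min t (t^2)" .
            have ind: "indicator (Uf -` {t<..}) v = (1::ennreal)" using True by (simp add: indicator_def)
            show ?thesis unfolding ind using Dle by (simp add: ennreal_leI)
          next
            case False
            then show ?thesis by (auto simp: D_out indicator_def)
          qed
        qed
        also have "\<dots> = ennreal (6 * m0 / min t (t^2))" by (simp add: e1)
        finally show ?thesis by (rule le_ennreal_fin)
      qed
    qed
    ultimately show "\<exists>A::real set set. countable A \<and> A \<subseteq> sets \<Lambda> \<and> \<Union>A = space \<Lambda> \<and> (\<forall>a\<in>A. emeasure \<Lambda> a \<noteq> \<infinity>)"
      by blast
  qed
  define \<theta> where "\<theta> = m0 * measure M {..0}"
  define d where "d = m0 * measure M {1..}"
  have id: "m0 * (\<integral>v. Gf lam v \<partial>M) = \<theta>*lam^2 + d*lam + (\<integral>u. (exp (- lam * u) - 1 + lam * u) \<partial>\<Lambda>)"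
    if lam: "0 \<le> lam" for lam
  proof -
    have I1: "(\<integral>u. (exp (- lam * u) - 1 + lam * u) \<partial>\<Lambda>) = (\<integral>v. Mf (lam * Uf v) \<partial>Dn)"
      unfolding \<Lambda>_def by (subst integral_distr) (auto simp: Mf_def)
    also have "\<dots> = (\<integral>v. D v * Mf (lam * Uf v) \<partial>M)"
      unfolding Dn_def by (subst integral_density) (auto simp: D_nn)
    finally have I1: "(\<integral>u. (exp (- lam * u) - 1 + lam * u) \<partial>\<Lambda>) = (\<integral>v. D v * Mf (lam * Uf v) \<partial>M)" .
    have pt: "m0 * Gf lam v = m0 * lam^2 * indicator {..0} v + m0 * lam * indicator {1..} v + D v * Mf (lam * Uf v)" for v
      by (cases "v \<le> 0"; cases "1 \<le> v") (auto simp: Gf_def D_def indicator_def)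
    have bnd: "\<bar>D v * Mf (lam * Uf v)\<bar> \<le> m0 * (6 * max lam (lam^2))" for v
    proof (cases "v \<in> {0<..<1}")
      case True
      have "D v * Mf (lam * Uf v) = m0 * Gf lam v" using True by (auto simp: D_in Gf_def)
      moreover have "\<bar>Gf lam v\<bar> \<le> 6 * max lam (lam^2)" by (rule Gf_bound[OF lam])
      ultimately show ?thesis using m0 by (simp add: abs_mult mult_left_mono)
    next
      case False then show ?thesis using m0 lam by (simp add: D_out)
    qed
    have int3: "integrable M (\<lambda>v. D v * Mf (lam * Uf v))"
      by (rule integrable_const_bound[where B="m0 * (6 * max lam (lam^2))"]) (use bnd in \<open>auto simp: measurable_cong_sets[OF events_eq_borel refl]\<close>)
    have "integrable M (indicator {..0} :: real \<Rightarrow> real)"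
      by (rule integrable_real_indicator) (auto simp: emeasure_eq_measure)
    then have int1: "integrable M (\<lambda>v. m0 * lam^2 * indicator {..0} v :: real)" by simp
    have "integrable M (indicator {1..} :: real \<Rightarrow> real)"
      by (rule integrable_real_indicator) (auto simp: emeasure_eq_measure)
    then have int2: "integrable M (\<lambda>v. m0 * lam * indicator {1..} v :: real)" by simp
    have "m0 * (\<integral>v. Gf lam v \<partial>M) = (\<integral>v. m0 * Gf lam v \<partial>M)" by simp
    also have "\<dots> = (\<integral>v. m0 * lam^2 * indicator {..0} v + m0 * lam * indicator {1..} v + D v * Mf (lam * Uf v) \<partial>M)"
      by (simp add: pt)
    also have "\<dots> = (\<integral>v. m0 * lam^2 * indicator {..0} v \<partial>M) + (\<integral>v. m0 * lam * indicator {1..} v \<partial>M)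
        + (\<integral>v. D v * Mf (lam * Uf v) \<partial>M)"
      using int1 int2 int3 by simp
    also have "\<dots> = \<theta>*lam^2 + d*lam + (\<integral>v. D v * Mf (lam * Uf v) \<partial>M)"
      by (simp add: \<theta>_def d_def)
    finally show ?thesis using I1 by simp
  qed
  have "\<theta> \<ge> 0" using m0 by (simp add: \<theta>_def)
  then show ?thesis using sL L0 sf fin id by blast
qed

lemma gen_fun_int: fixes P :: "nat pmf" and s :: real assumes "0 \<le> s" "s \<le> 1"
  shows "integrable P (\<lambda>k. s ^ k)"
  by (rule measure_pmf.integrable_const_bound[where B=1]) (use assms in \<open>auto simp: power_le_one\<close>)

lemma Nf_int: fixes P :: "nat pmf" assumes "integrable P real" "0 \<le> y" "y \<le> 1"
  shows "integrable P (\<lambda>k. Nf k y)"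
proof -
  have a: "integrable P (\<lambda>k. (1-y)^k)" using assms by (intro gen_fun_int) auto
  have b: "integrable P (\<lambda>k. real k * y)" using assms(1) by simp
  have "integrable P (\<lambda>k. (1-y)^k - 1 + real k * y)" using a b by simp
  then show ?thesis by (simp add: Nf_def)
qed
lemma yy: fixes B :: real assumes B: "1 \<le> B" shows "1 / (B * (real m + 1)) \<le> 1/B" "0 < 1 / (B * (real m + 1))"
proof -
  have "B * 1 \<le> B * (real m + 1)" using B by (intro mult_left_mono) auto
  then show "1 / (B * (real m + 1)) \<le> 1/B" using B by (intro divide_left_mono) auto
  show "0 < 1 / (B * (real m + 1))" using B by simp
qed
lemma repr: fixes P :: "nat pmf" assumes int: "integrable P real" and y: "0 \<le> y" "y \<le> 1"
  shows "(1-y) - gen_fun P (1-y) = y * ((\<integral>k. real k \<partial>P) - 1) - (\<integral>k. Nf k y \<partial>P)"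
proof -
  have i1: "integrable P (\<lambda>k. (1-y) ^ k)" using y by (intro gen_fun_int) auto
  have "(\<integral>k. Nf k y \<partial>P) = (\<integral>k. (1-y)^k \<partial>P) - (\<integral>k. 1 \<partial>P) + (\<integral>k. real k * y \<partial>P)"
    unfolding Nf_def using i1 int by (simp add: integral_add integral_diff)
  also have "\<dots> = gen_fun P (1-y) - 1 + y * (\<integral>k. real k \<partial>P)"
    by (simp add: gen_fun_def mult.commute)
  finally show ?thesis by (simp add: algebra_simps)
qed

lemma fps_limit: fixes k :: nat
  assumes "y \<longlonglongrightarrow> 0" "\<And>m. 0 < y m"
  shows "(\<lambda>m. (1 - (1 - y m)^k) / y m) \<longlonglongrightarrow> real k"
proof -
  have eq: "(1 - (1 - y m)^k) / y m = (\<Sum>i<k. (1 - y m)^i)" for m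
  proof -
    have "1 - (1 - y m)^k = (1 - (1 - y m)) * (\<Sum>i<k. (1 - y m)^i)" by (rule one_diff_power_eq)
    then show ?thesis using assms(2)[of m] by simp
  qed
  have "(\<lambda>m. \<Sum>i<k. (1 - y m)^i) \<longlonglongrightarrow> (\<Sum>i<k. (1 - 0)^i)"
    by (intro tendsto_intros assms(1))
  then show ?thesis unfolding eq by simp
qed

lemma mean_bound:
  fixes P :: "nat pmf" and B nn L :: real
  assumes B: "1 \<le> B" and nn: "1 \<le> nn" and L: "0 \<le> L"
    and lip: "\<And>lam. 0 \<le> lam \<Longrightarrow> lam \<le> 1 \<Longrightarrow> nn * B * ((1 - lam/B) - gen_fun P (1 - lam/B)) \<le> L * lam"
  shows "integrable P real \<and> (\<integral>k. real k \<partial>P) \<le> L/nn + 1"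
proof -
  define C where "C = L/nn + 1"
  have C: "0 \<le> C" using L nn by (simp add: C_def)
  define y where "y m = 1 / (B * (real m + 1))" for m
  have y: "0 < y m" "y m \<le> 1/B" for m using yy[OF B, of m] by (auto simp: y_def)
  have B1: "1/B \<le> 1" using B by simp
  have y1: "y m \<le> 1" for m using y[of m] B1 by linarith
  have ylim: "y \<longlonglongrightarrow> 0"
  proof -
    have eq: "y = (\<lambda>m. (1/B) * inverse (real (Suc m)))"
      by (auto simp: y_def fun_eq_iff divide_inverse mult.commute)
    have "(\<lambda>m. (1/B) * inverse (real (Suc m))) \<longlonglongrightarrow> (1/B) * 0"
      by (intro tendsto_intros LIMSEQ_inverse_real_of_nat)
    then show ?thesis unfolding eq by simp
  qed
  define f where "f m k = (1 - (1 - y m)^k) / y m" for m k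
  have f_nn: "0 \<le> f m k" for m k
  proof -
    have "(1 - y m)^k \<le> 1" using y[of m] y1[of m] by (intro power_le_one) auto
    then show ?thesis using y[of m] by (simp add: f_def)
  qed
  have f_int: "integrable P (f m)" for m
    unfolding f_def using gen_fun_int[of "1 - y m" P] y[of m] y1[of m] by (intro integrable_divide integrable_diff) auto
  have f_bd: "(\<integral>k. f m k \<partial>P) \<le> C" for m
  proof -
    define lam where "lam = y m * B"
    have lam: "0 \<le> lam" "lam \<le> 1" using y[of m] B by (auto simp: lam_def field_simps)
    have ylam: "lam / B = y m" using B by (simp add: lam_def)
    define X where "X = (1 - y m) - gen_fun P (1 - y m)"
    have "nn * B * X \<le> L * lam" using lip[OF lam] by (simp add: ylam X_def)
    then have h1: "B * (nn * X) \<le> B * (L * y m)" by (simp add: lam_def mult_ac)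
    have h2: "nn * X \<le> L * y m" using h1 B by (simp add: mult_le_cancel_left_pos)
    then have "X \<le> L * y m / nn" using nn by (simp add: pos_le_divide_eq mult.commute)
    then have "(1 - y m) - gen_fun P (1 - y m) \<le> L * y m / nn" by (simp add: X_def)
    moreover have "(1 - y m) - gen_fun P (1 - y m) = (\<integral>k. (1 - (1 - y m)^k) \<partial>P) - y m"
      using gen_fun_int[of "1 - y m" P] y[of m] y1[of m] by (simp add: gen_fun_def integral_diff)
    ultimately have "(\<integral>k. (1 - (1 - y m)^k) \<partial>P) \<le> y m * C"
      by (simp add: C_def algebra_simps)
    then have "(\<integral>k. (1 - (1 - y m)^k) \<partial>P) / y m \<le> C" using y[of m] by (simp add: divide_le_eq mult.commute)
    then show ?thesis by (simp add: f_def)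
  qed
  have "(\<integral>\<^sup>+ k. ennreal (real k) \<partial>P) = (\<integral>\<^sup>+ k. liminf (\<lambda>m. ennreal (f m k)) \<partial>P)"
  proof (rule nn_integral_cong)
    fix k
    have "(\<lambda>m. ennreal (f m k)) \<longlonglongrightarrow> ennreal (real k)"
      unfolding f_def by (intro tendsto_ennrealI fps_limit ylim y)
    then show "ennreal (real k) = liminf (\<lambda>m. ennreal (f m k))"
      by (simp add: lim_imp_Liminf)
  qed
  also have "\<dots> \<le> liminf (\<lambda>m. \<integral>\<^sup>+ k. ennreal (f m k) \<partial>P)"
    by (rule nn_integral_liminf) simp
  also have "\<dots> \<le> ennreal C"
  proof (rule Liminf_le)
    show "\<forall>\<^sub>F m in sequentially. (\<integral>\<^sup>+ k. ennreal (f m k) \<partial>P) \<le> ennreal C"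
    proof (intro always_eventually allI)
      fix m
      have "(\<integral>\<^sup>+ k. ennreal (f m k) \<partial>P) = ennreal (\<integral>k. f m k \<partial>P)"
        by (rule nn_integral_eq_integral[OF f_int]) (simp add: f_nn)
      then show "(\<integral>\<^sup>+ k. ennreal (f m k) \<partial>P) \<le> ennreal C" using f_bd[of m] by (simp add: ennreal_leI)
    qed
  qed simp
  finally have nnle: "(\<integral>\<^sup>+ k. ennreal (real k) \<partial>P) \<le> ennreal C" .
  have int: "integrable P real"
    unfolding integrable_iff_bounded using nnle by (auto simp: top.not_eq_extremum order.strict_trans1 ennreal_less_top intro: le_less_trans)
  have "(\<integral>k. real k \<partial>P) = enn2real (\<integral>\<^sup>+ k. ennreal (real k) \<partial>P)"
    by (rule integral_eq_nn_integral) auto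
  also have "\<dots> \<le> C" using nnle C by (simp add: enn2real_leI)
  finally show ?thesis using int by (simp add: C_def)
qed

lemma kernel_int:
  fixes P :: "nat pmf" and B lam \<epsilon> Gb :: real and G :: "nat \<Rightarrow> real"
  assumes int: "integrable P real" and B: "1 \<le> B" and lam: "0 \<le> lam" "lam \<le> B"
    and ker: "\<And>k. \<bar>Nf k (lam/B) - Nf k (1/B) * G k\<bar> \<le> \<epsilon> * Nf k (1/B)"
    and Gb: "\<And>k. \<bar>G k\<bar> \<le> Gb"
  shows "\<bar>(\<integral>k. Nf k (lam/B) \<partial>P) - (\<integral>k. Nf k (1/B) * G k \<partial>P)\<bar> \<le> \<epsilon> * (\<integral>k. Nf k (1/B) \<partial>P)"
proof -
  have y1: "0 \<le> lam/B" "lam/B \<le> 1" using B lam by (auto simp: field_simps)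
  have y2: "0 \<le> 1/B" "1/B \<le> 1" using B by auto
  have i1: "integrable P (\<lambda>k. Nf k (lam/B))" using Nf_int[OF int y1] .
  have i2: "integrable P (\<lambda>k. Nf k (1/B))" using Nf_int[OF int y2] .
  have i3: "integrable P (\<lambda>k. Nf k (1/B) * G k)"
  proof (rule Bochner_Integration.integrable_bound[OF integrable_mult_right[OF i2, of Gb]])
    show "(\<lambda>k. Nf k (1/B) * G k) \<in> borel_measurable P" by simp
    show "AE k in P. norm (Nf k (1/B) * G k) \<le> norm (Gb * Nf k (1/B))"
    proof (intro AE_I2)
      fix k
      have n: "0 \<le> Nf k (1/B)" using Nf_nonneg[OF y2] .
      have "\<bar>Nf k (1/B) * G k\<bar> = Nf k (1/B) * \<bar>G k\<bar>" using n by (simp add: abs_mult)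
      also have "\<dots> \<le> Nf k (1/B) * Gb" using n Gb[of k] by (intro mult_left_mono) auto
      also have "\<dots> \<le> \<bar>Gb * Nf k (1/B)\<bar>" by (simp add: mult.commute)
      finally show "norm (Nf k (1/B) * G k) \<le> norm (Gb * Nf k (1/B))" by simp
    qed
  qed
  have "\<bar>(\<integral>k. Nf k (lam/B) \<partial>P) - (\<integral>k. Nf k (1/B) * G k \<partial>P)\<bar>
      = \<bar>\<integral>k. Nf k (lam/B) - Nf k (1/B) * G k \<partial>P\<bar>" using i1 i3 by simp
  also have "\<dots> \<le> (\<integral>k. \<bar>Nf k (lam/B) - Nf k (1/B) * G k\<bar> \<partial>P)"
    using integral_norm_bound[of P "\<lambda>k. Nf k (lam/B) - Nf k (1/B) * G k"] by simp
  also have "\<dots> \<le> (\<integral>k. \<epsilon> * Nf k (1/B) \<partial>P)"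
    using i1 i2 i3 ker by (intro integral_mono) auto
  also have "\<dots> = \<epsilon> * (\<integral>k. Nf k (1/B) \<partial>P)" by simp
  finally show ?thesis .
qed

lemma mu_ident:
  fixes P :: "nat pmf" and w \<phi> :: "nat \<Rightarrow> real" and m :: real and g :: "real \<Rightarrow> real"
  assumes w: "\<And>k. 0 \<le> w k" and wi: "integrable P w" and m: "m = (\<integral>k. w k \<partial>P)" "0 < m"
    and g: "g \<in> borel_measurable borel" and gb: "\<And>x. \<bar>g x\<bar> \<le> Gb"
  shows "real_distribution (distr (density P (\<lambda>k. ennreal (w k / m))) borel \<phi>)"
    and "m * (\<integral>x. g x \<partial>(distr (density P (\<lambda>k. ennreal (w k / m))) borel \<phi>)) = (\<integral>k. w k * g (\<phi> k) \<partial>P)"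
proof -
  define D where "D = density P (\<lambda>k. ennreal (w k / m))"
  have meas: "\<phi> \<in> measurable D borel" by (simp add: D_def)
  have "emeasure D (space D) = (\<integral>\<^sup>+ k. ennreal (w k / m) \<partial>P)"
    by (simp add: D_def emeasure_density)
  also have "\<dots> = ennreal (\<integral>k. w k / m \<partial>P)"
    by (rule nn_integral_eq_integral) (use wi w m in auto)
  also have "(\<integral>k. w k / m \<partial>P) = 1" using m by simp
  finally have "prob_space D" by (intro prob_spaceI) simp
  then interpret D: prob_space D .
  have "prob_space (distr D borel \<phi>)" by (rule D.prob_space_distr[OF meas])
  then show "real_distribution (distr (density P (\<lambda>k. ennreal (w k / m))) borel \<phi>)"
    unfolding D_def[symmetric] by (auto simp: real_distribution_def real_distribution_axioms_def)
  have "(\<integral>x. g x \<partial>(distr D borel \<phi>)) = (\<integral>k. g (\<phi> k) \<partial>D)"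
    by (rule integral_distr[OF meas g])
  also have "\<dots> = (\<integral>k. (w k / m) * g (\<phi> k) \<partial>P)"
    unfolding D_def by (subst integral_density) (use w m in auto)
  finally show "m * (\<integral>x. g x \<partial>(distr (density P (\<lambda>k. ennreal (w k / m))) borel \<phi>)) = (\<integral>k. w k * g (\<phi> k) \<partial>P)"
    using m by (simp add: D_def)
qed

theorem lemma2p1:
  fixes p :: "nat \<Rightarrow> nat pmf" and b :: "nat \<Rightarrow> real" and R :: "real \<Rightarrow> real"
  assumes b_pos: "\<And>n. b n > 0"
    and b_lim: "filterlim b at_top sequentially"
    and A_lip: "\<And>a. a \<ge> 0 \<Longrightarrow> \<exists>L. \<forall>\<^sub>F n in sequentially. L-lipschitz_on {0..a} (Rfun p b n)"
    and A_lim: "\<And>lam. lam \<ge> 0 \<Longrightarrow> (\<lambda>n. Rfun p b n lam) \<longlonglongrightarrow> R lam"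
    and A_cont: "continuous_on {0..} R"
  shows "\<exists>(c::real) (\<theta>::real) (\<Lambda>::real measure).
           \<theta> \<ge> 0 \<and> sets \<Lambda> = sets borel \<and> emeasure \<Lambda> {..0} = 0 \<and>
           sigma_finite_measure \<Lambda> \<and>
           (\<integral>\<^sup>+ u. ennreal (min u (u^2)) \<partial>\<Lambda>) < \<infinity> \<and>
           (\<forall>lam\<ge>0. R lam = c * lam - \<theta> * lam^2
               - (\<integral>u. (exp (- lam * u) - 1 + lam * u) \<partial>\<Lambda>))"
proof -
  obtain L where evL: "\<forall>\<^sub>F n in sequentially. L-lipschitz_on {0..1} (Rfun p b n)" using A_lip[of 1] by auto
  have evB: "\<forall>\<^sub>F n in sequentially. 1 \<le> b n" using b_lim by (simp add: filterlim_at_top)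
  have ev1: "\<forall>\<^sub>F n in sequentially. 1 \<le> n" by simp
  from eventually_conj[OF evL eventually_conj[OF evB ev1]] obtain N0 where
    N0: "\<And>n. n \<ge> N0 \<Longrightarrow> L-lipschitz_on {0..1} (Rfun p b n) \<and> 1 \<le> b n \<and> 1 \<le> n"
    by (auto simp: eventually_sequentially)
  have L0: "0 \<le> L" using N0[of N0] lipschitz_on_nonneg by blast
  define EXm where "EXm n = (\<integral>k. real k \<partial>(p n))" for n
  define cc where "cc n = real n * (EXm n - 1)" for n
  define II where "II n lam = real n * b n * (\<integral>k. Nf k (lam / b n) \<partial>(p n))" for n lam
  define mm where "mm n = II n 1" for n
  have R0: "Rfun p b n 0 = 0" for n by (simp add: Rfun_def gen_fun_def)
  have lipb: "\<bar>Rfun p b n lam\<bar> \<le> L * lam" if "n \<ge> N0" "0 \<le> lam" "lam \<le> 1" for n lam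
    using lipschitz_onD[of L "{0..1}" "Rfun p b n" lam 0] N0[OF that(1)] that by (simp add: R0 dist_real_def)
  have nb: "1 \<le> b n" "1 \<le> real n" if "n \<ge> N0" for n using N0[OF that] by auto
  have intg: "integrable (p n) real \<and> EXm n \<le> L / real n + 1" if n: "n \<ge> N0" for n
  proof -
    have "integrable (p n) real \<and> (\<integral>k. real k \<partial>(p n)) \<le> L / real n + 1"
    proof (rule mean_bound[OF nb(1)[OF n] nb(2)[OF n] L0])
      fix lam :: real assume "0 \<le> lam" "lam \<le> 1"
      then have "Rfun p b n lam \<le> L * lam" using lipb[OF n] by fastforce
      then show "real n * b n * ((1 - lam / b n) - gen_fun (p n) (1 - lam / b n)) \<le> L * lam"
        by (simp add: Rfun_def)
    qed
    then show ?thesis by (simp add: EXm_def)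
  qed
  have ccle: "cc n \<le> L" if n: "n \<ge> N0" for n
  proof -
    have "EXm n - 1 \<le> L / real n" using intg[OF n] by simp
    then have "real n * (EXm n - 1) \<le> real n * (L / real n)" using nb(2)[OF n] by (intro mult_left_mono) auto
    then show ?thesis using nb(2)[OF n] by (simp add: cc_def)
  qed
  have Rrep: "Rfun p b n lam = cc n * lam - II n lam" if n: "n \<ge> N0" and lam: "0 \<le> lam" "lam \<le> b n" for n lam
  proof -
    have y: "0 \<le> lam / b n" "lam / b n \<le> 1" using lam nb(1)[OF n] by (auto simp: field_simps)
    have "Rfun p b n lam = real n * b n * (lam / b n * (EXm n - 1) - (\<integral>k. Nf k (lam / b n) \<partial>(p n)))"
      unfolding Rfun_def EXm_def using repr[OF conjunct1[OF intg[OF n]] y] by simp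
    also have "\<dots> = cc n * lam - II n lam" using b_pos[of n] by (simp add: cc_def II_def field_simps)
    finally show ?thesis .
  qed
  have IInn: "0 \<le> II n lam" if n: "n \<ge> N0" and lam: "0 \<le> lam" "lam \<le> b n" for n lam
  proof -
    have y: "0 \<le> lam / b n" "lam / b n \<le> 1" using lam nb(1)[OF n] by (auto simp: field_simps)
    have "0 \<le> (\<integral>k. Nf k (lam / b n) \<partial>(p n))" by (intro integral_nonneg_AE AE_I2 Nf_nonneg y)
    then show ?thesis using b_pos[of n] by (simp add: II_def)
  qed
  have ccge: "- L \<le> cc n" if n: "n \<ge> N0" for n
  proof -
    have "Rfun p b n 1 = cc n * 1 - II n 1" using Rrep[OF n] nb(1)[OF n] by simp
    moreover have "0 \<le> II n 1" using IInn[OF n] nb(1)[OF n] by simp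
    moreover have "\<bar>Rfun p b n 1\<bar> \<le> L" using lipb[OF n, of 1] by simp
    ultimately show ?thesis by linarith
  qed
  obtain K where K: "\<And>n. \<bar>Rfun p b n 1\<bar> \<le> K"
  proof -
    have "Bseq (\<lambda>n. Rfun p b n 1)" using A_lim[of 1] by (intro convergent_imp_Bseq) (auto simp: convergent_def)
    then obtain K where "0 < K" "\<forall>n. norm (Rfun p b n 1) \<le> K" by (rule BseqE)
    then show ?thesis using that by auto
  qed
  have mmb: "0 \<le> mm n \<and> mm n \<le> L + K" if n: "n \<ge> N0" for n
  proof -
    have "Rfun p b n 1 = cc n * 1 - II n 1" using Rrep[OF n] nb(1)[OF n] by simp
    moreover have "0 \<le> II n 1" using IInn[OF n] nb(1)[OF n] by simp
    ultimately show ?thesis using K[of n] ccle[OF n] by (simp add: mm_def)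
  qed
  define \<phi> where "\<phi> n k = (real k / b n) / (1 + real k / b n)" for n k
  define w where "w n k = real n * b n * Nf k (1 / b n)" for n k
  define \<mu> where "\<mu> n = (if N0 \<le> n \<and> 0 < mm n
      then distr (density (p n) (\<lambda>k. ennreal (w n k / mm n))) borel (\<phi> n) else return borel 0)" for n
  have w_nn: "0 \<le> w n k" if n: "n \<ge> N0" for n k
    using Nf_nonneg[of "1 / b n" k] nb[OF n] b_pos[of n] by (simp add: w_def)
  have w_int: "integrable (p n) (w n)" if n: "n \<ge> N0" for n
    unfolding w_def using Nf_int[OF conjunct1[OF intg[OF n]], of "1 / b n"] nb[OF n] by simp
  have mm_w: "mm n = (\<integral>k. w n k \<partial>(p n))" for n
    by (simp add: mm_def II_def w_def)
  have Gmeas: "Gf lam \<in> borel_measurable borel" if "0 \<le> lam" for lam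
    by (rule borel_measurable_continuous_onI, rule continuous_at_imp_continuous_on) (use Gf_isCont that in blast)
  have \<mu>real: "real_distribution (\<mu> n)" for n
  proof (cases "N0 \<le> n \<and> 0 < mm n")
    case True
    then show ?thesis unfolding \<mu>_def
      using mu_ident(1)[of "w n" "p n" "mm n" "\<lambda>_. 0" 0 "\<phi> n"] w_nn w_int mm_w by auto
  next
    case False
    then show ?thesis unfolding \<mu>_def
      by (auto simp: real_distribution_def real_distribution_axioms_def intro!: prob_space_return)
  qed
  have \<mu>ident: "mm n * (\<integral>x. Gf lam x \<partial>\<mu> n) = real n * b n * (\<integral>k. Nf k (1 / b n) * Gf lam (\<phi> n k) \<partial>(p n))"
    if n: "n \<ge> N0" and lam: "0 \<le> lam" for n lam
  proof (cases "0 < mm n")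
    case True
    have "mm n * (\<integral>x. Gf lam x \<partial>\<mu> n) = (\<integral>k. w n k * Gf lam (\<phi> n k) \<partial>(p n))"
      unfolding \<mu>_def using True n
      using mu_ident(2)[of "w n" "p n" "mm n" "Gf lam" "6 * max lam (lam^2)" "\<phi> n"] w_nn w_int mm_w Gmeas[OF lam] Gf_bound[OF lam]
      by auto
    also have "\<dots> = real n * b n * (\<integral>k. Nf k (1 / b n) * Gf lam (\<phi> n k) \<partial>(p n))"
      by (simp add: w_def mult_ac)
    finally show ?thesis .
  next
    case False
    then have m0: "mm n = 0" using mmb[OF n] by simp
    have y: "0 \<le> 1 / b n" "1 / b n \<le> 1" using nb[OF n] by auto
    have "(\<integral>k. Nf k (1 / b n) \<partial>(p n)) = 0" using m0 b_pos[of n] nb[OF n] by (simp add: mm_def II_def)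
    then have "AE k in p n. Nf k (1 / b n) = 0"
      using integral_nonneg_eq_0_iff_AE[OF Nf_int[OF conjunct1[OF intg[OF n]] y]] Nf_nonneg[OF y] by auto
    then have "(\<integral>k. Nf k (1 / b n) * Gf lam (\<phi> n k) \<partial>(p n)) = (\<integral>k. 0 \<partial>(p n))"
      by (intro integral_cong_AE) auto
    then show ?thesis using m0 by simp
  qed
  have tight: "tight \<mu>"
    unfolding tight_def
  proof (intro conjI allI impI)
    fix n show "real_distribution (\<mu> n)" by (rule \<mu>real)
  next
    fix \<epsilon> :: real assume e: "0 < \<epsilon>"
    have "measure (\<mu> n) {-1<..1} = 1" for n
    proof (cases "N0 \<le> n \<and> 0 < mm n")
      case True
      define D where "D = density (p n) (\<lambda>k. ennreal (w n k / mm n))"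
      have meas: "\<phi> n \<in> measurable D borel" by (simp add: D_def)
      have pre: "\<phi> n -` {-1<..1} \<inter> space D = \<phi> n -` UNIV \<inter> space D"
      proof -
        have "\<phi> n k \<in> {-1<..1}" for k
        proof -
          have u: "0 \<le> real k / b n" using b_pos[of n] by simp
          have gen: "\<And>u::real. 0 \<le> u \<Longrightarrow> 0 \<le> u/(1+u) \<and> u/(1+u) \<le> 1" by (simp add: divide_le_eq)
          note gen[OF u]
          then show ?thesis by (simp add: \<phi>_def del: divide_divide_eq_left)
        qed
        then show ?thesis by auto
      qed
      have "measure (\<mu> n) {-1<..1} = measure (\<mu> n) UNIV"
        using True unfolding \<mu>_def D_def[symmetric]
        by (simp add: measure_distr[OF meas] pre del: vimage_UNIV)
      also have "\<dots> = 1"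
      proof -
        interpret real_distribution "\<mu> n" by (rule \<mu>real)
        show ?thesis using prob_space by simp
      qed
      finally show ?thesis .
    next
      case False
      show ?thesis unfolding \<mu>_def if_not_P[OF False] by (simp add: measure_return)
    qed
    then show "\<exists>a b::real. a < b \<and> (\<forall>n. 1 - \<epsilon> < measure (\<mu> n) {a<..b})"
      using e by (intro exI[of _ "-1"] exI[of _ 1]) auto
  qed
  define f where "f j = (cc (j + N0), mm (j + N0))" for j
  have "bounded (range f)"
    unfolding bounded_iff
  proof (intro exI[of _ "L + (L + K)"] ballI)
    fix x assume "x \<in> range f"
    then obtain j where x: "x = f j" by auto
    have n: "j + N0 \<ge> N0" by simp
    have "norm x \<le> norm (cc (j + N0)) + norm (mm (j + N0))" unfolding x f_def by (rule norm_Pair_le)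
    also have "\<dots> \<le> L + (L + K)" using ccle[OF n] ccge[OF n] mmb[OF n] by (auto simp: abs_if)
    finally show "norm x \<le> L + (L + K)" .
  qed
  then obtain l r where r: "strict_mono r" and fr: "(f \<circ> r) \<longlonglongrightarrow> l"
    using bounded_imp_convergent_subsequence by blast
  define r1 where "r1 j = r j + N0" for j
  have r1: "strict_mono r1" using r by (simp add: strict_mono_def r1_def)
  have cc_r1: "(\<lambda>j. cc (r1 j)) \<longlonglongrightarrow> fst l" using tendsto_fst[OF fr] by (simp add: f_def r1_def o_def)
  have mm_r1: "(\<lambda>j. mm (r1 j)) \<longlonglongrightarrow> snd l" using tendsto_snd[OF fr] by (simp add: f_def r1_def o_def)
  obtain r2 M where r2: "strict_mono r2" and M: "real_distribution M" and wc: "weak_conv_m (\<mu> \<circ> r1 \<circ> r2) M"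
    using tight_imp_convergent_subsubsequence[OF tight r1] by blast
  define \<sigma> where "\<sigma> = r1 \<circ> r2"
  have \<sigma>: "strict_mono \<sigma>" using r1 r2 by (simp add: \<sigma>_def strict_mono_o)
  have \<sigma>N: "\<sigma> j \<ge> N0" for j by (simp add: \<sigma>_def r1_def)
  define c0 where "c0 = fst l"
  define m0 where "m0 = snd l"
  have cc_s: "(\<lambda>j. cc (\<sigma> j)) \<longlonglongrightarrow> c0"
    using LIMSEQ_subseq_LIMSEQ[OF cc_r1 r2] by (simp add: \<sigma>_def c0_def o_def)
  have mm_s: "(\<lambda>j. mm (\<sigma> j)) \<longlonglongrightarrow> m0"
    using LIMSEQ_subseq_LIMSEQ[OF mm_r1 r2] by (simp add: \<sigma>_def m0_def o_def)
  have m0: "0 \<le> m0"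
    by (rule LIMSEQ_le_const[OF mm_s]) (use mmb \<sigma>N in blast)
  have b_s: "filterlim (\<lambda>j. b (\<sigma> j)) at_top sequentially"
    by (rule filterlim_compose[OF b_lim filterlim_subseq[OF \<sigma>]])
  have key: "R lam = c0 * lam - m0 * (\<integral>x. Gf lam x \<partial>M)" if lam: "0 \<le> lam" for lam
  proof -
    define G where "G = (6 * max lam (lam^2))"
    have A: "(\<lambda>j. Rfun p b (\<sigma> j) lam) \<longlonglongrightarrow> R lam"
      using LIMSEQ_subseq_LIMSEQ[OF A_lim[OF lam] \<sigma>] by (simp add: o_def)
    have B: "(\<lambda>j. \<integral>x. Gf lam x \<partial>\<mu> (\<sigma> j)) \<longlonglongrightarrow> (\<integral>x. Gf lam x \<partial>M)"
    proof -
      have "(\<lambda>j. integral\<^sup>L ((\<mu> \<circ> r1 \<circ> r2) j) (Gf lam)) \<longlonglongrightarrow> integral\<^sup>L M (Gf lam)"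
        by (rule weak_conv_imp_integral_bdd_continuous_conv[OF _ M wc Gf_isCont[OF lam], where B=G])
          (use \<mu>real Gf_bound[OF lam] in \<open>auto simp: G_def\<close>)
      then show ?thesis by (simp add: \<sigma>_def o_def)
    qed
    have C: "(\<lambda>j. II (\<sigma> j) lam - mm (\<sigma> j) * (\<integral>x. Gf lam x \<partial>\<mu> (\<sigma> j))) \<longlonglongrightarrow> 0"
    proof (rule LIMSEQ_I)
      fix e :: real assume e: "0 < e"
      define \<epsilon> where "\<epsilon> = e / (2 * (L + K + 1))"
      have LK: "0 \<le> L + K" using mmb[OF order.refl[of N0]] by linarith
      have eps: "0 < \<epsilon>" using e LK by (simp add: \<epsilon>_def)
      obtain Bk where Bk: "0 < Bk" and ker: "\<And>bb k. bb \<ge> Bk \<Longrightarrow> \<bar>Nf k (lam/bb) - Nf k (1/bb) * Gf lam ((real k / bb) / (1 + real k / bb))\<bar> \<le> \<epsilon> * Nf k (1/bb)"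
        using kernel[OF lam eps] by blast
      have "\<forall>\<^sub>F j in sequentially. max Bk (max lam 1) \<le> b (\<sigma> j)"
        using b_s unfolding filterlim_at_top by blast
      then obtain J where J: "\<And>j. j \<ge> J \<Longrightarrow> max Bk (max lam 1) \<le> b (\<sigma> j)"
        by (auto simp: eventually_sequentially)
      show "\<exists>no. \<forall>j\<ge>no. norm (II (\<sigma> j) lam - mm (\<sigma> j) * (\<integral>x. Gf lam x \<partial>\<mu> (\<sigma> j)) - 0) < e"
      proof (intro exI allI impI)
        fix j assume j: "J \<le> j"
        define n where "n = \<sigma> j"
        have n: "n \<ge> N0" by (simp add: n_def \<sigma>N)
        have bn: "Bk \<le> b n" "lam \<le> b n" "1 \<le> b n" using J[OF j] by (auto simp: n_def)
        have ki: "\<bar>(\<integral>k. Nf k (lam / b n) \<partial>(p n)) - (\<integral>k. Nf k (1 / b n) * Gf lam (\<phi> n k) \<partial>(p n))\<bar>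
            \<le> \<epsilon> * (\<integral>k. Nf k (1 / b n) \<partial>(p n))"
          by (rule kernel_int[OF conjunct1[OF intg[OF n]] bn(3) lam bn(2), where Gb = G])
            (use ker[OF bn(1)] Gf_bound[OF lam] in \<open>auto simp: \<phi>_def G_def\<close>)
        have nbpos: "0 < real n * b n" using nb[OF n] by simp
        have "\<bar>II n lam - mm n * (\<integral>x. Gf lam x \<partial>\<mu> n)\<bar>
            = real n * b n * \<bar>(\<integral>k. Nf k (lam / b n) \<partial>(p n)) - (\<integral>k. Nf k (1 / b n) * Gf lam (\<phi> n k) \<partial>(p n))\<bar>"
          unfolding \<mu>ident[OF n lam] II_def using nbpos b_pos[of n] by (simp add: abs_mult right_diff_distrib[symmetric])
        also have "\<dots> \<le> real n * b n * (\<epsilon> * (\<integral>k. Nf k (1 / b n) \<partial>(p n)))"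
          using ki nbpos by (intro mult_left_mono) auto
        also have "\<dots> = \<epsilon> * mm n" by (simp add: mm_def II_def)
        also have "\<dots> \<le> \<epsilon> * (L + K)" using mmb[OF n] eps by (intro mult_left_mono) auto
        also have "\<dots> < e"
        proof -
          have "\<epsilon> * (L + K) = e * ((L + K) / (2 * (L + K + 1)))" by (simp add: \<epsilon>_def)
          also have "\<dots> < e * 1" using e LK by (intro mult_strict_left_mono) auto
          finally show ?thesis by simp
        qed
        finally show "norm (II (\<sigma> j) lam - mm (\<sigma> j) * (\<integral>x. Gf lam x \<partial>\<mu> (\<sigma> j)) - 0) < e"
          by (simp add: n_def)
      qed
    qed
    have D: "(\<lambda>j. II (\<sigma> j) lam) \<longlonglongrightarrow> 0 + m0 * (\<integral>x. Gf lam x \<partial>M)"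
    proof -
      have "(\<lambda>j. (II (\<sigma> j) lam - mm (\<sigma> j) * (\<integral>x. Gf lam x \<partial>\<mu> (\<sigma> j))) + mm (\<sigma> j) * (\<integral>x. Gf lam x \<partial>\<mu> (\<sigma> j)))
          \<longlonglongrightarrow> 0 + m0 * (\<integral>x. Gf lam x \<partial>M)"
        by (intro tendsto_add tendsto_mult C mm_s B)
      then show ?thesis by simp
    qed
    have E: "(\<lambda>j. cc (\<sigma> j) * lam - II (\<sigma> j) lam) \<longlonglongrightarrow> c0 * lam - (0 + m0 * (\<integral>x. Gf lam x \<partial>M))"
      by (intro tendsto_diff tendsto_mult cc_s tendsto_const D)
    have ev: "\<forall>\<^sub>F j in sequentially. cc (\<sigma> j) * lam - II (\<sigma> j) lam = Rfun p b (\<sigma> j) lam"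
    proof -
      have "\<forall>\<^sub>F j in sequentially. lam \<le> b (\<sigma> j)" using b_s by (simp add: filterlim_at_top)
      then show ?thesis by eventually_elim (use Rrep \<sigma>N lam in auto)
    qed
    have "(\<lambda>j. Rfun p b (\<sigma> j) lam) \<longlonglongrightarrow> c0 * lam - (0 + m0 * (\<integral>x. Gf lam x \<partial>M))"
      using tendsto_cong[OF ev] E by blast
    then show ?thesis using LIMSEQ_unique[OF A] by simp
  qed
  obtain \<theta> d \<Lambda> where th: "\<theta> \<ge> 0" and L1: "sets \<Lambda> = sets borel" and L2: "emeasure \<Lambda> {..0} = 0"
    and L3: "sigma_finite_measure \<Lambda>" and L4: "(\<integral>\<^sup>+ u. ennreal (min u (u^2)) \<partial>\<Lambda>) < \<infinity>"
    and L5: "\<And>lam. lam \<ge> 0 \<Longrightarrow> m0 * (\<integral>v. Gf lam v \<partial>M) = \<theta>*lam^2 + d*lam + (\<integral>u. (exp (- lam * u) - 1 + lam * u) \<partial>\<Lambda>)"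
    using final_repr[OF M m0] by blast
  have "\<forall>lam\<ge>0. R lam = (c0 - d) * lam - \<theta> * lam^2 - (\<integral>u. (exp (- lam * u) - 1 + lam * u) \<partial>\<Lambda>)"
  proof (intro allI impI)
    fix lam :: real assume lam: "0 \<le> lam"
    show "R lam = (c0 - d) * lam - \<theta> * lam^2 - (\<integral>u. (exp (- lam * u) - 1 + lam * u) \<partial>\<Lambda>)"
      using key[OF lam] L5[OF lam] by (simp add: algebra_simps)
  qed
  then show ?thesis using th L1 L2 L3 L4 by blast
qed

end
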